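(* Let $(Q,* )$ and $(Q',\cdot)$ be automorphic loops and let $f:(Q,* )\to(Q',\cdot)$ be a half-isomorphism. If $(Q',\cdot)$ satisfies condition (C) (for all $a,b\in Q'$: $a\cdot(a\cdot b)=(b\cdot a)\cdot a$ if and only if $a\cdot b=b\cdot a$), then $(Q,* )$ also satisfies condition (C): for all $x,y\in Q$, $x*(x*y)=(y*x)*x$ if and only if $x*y=y*x$.
   Context: A loop is a set with a binary operation in which all equations $ax=b$, $ya=b$ are uniquely solvable and which has a two-sided identity. For $a\in L$, $R_a:x\mapsto xa$, $L_a:x\mapsto ax$; the inner mapping group is the stabilizer of the identity in the group generated by all $R_a,L_a$. A loop is automorphic if every inner mapping is an automorphism. A half-isomorphism between loops $(L,* )$, $(L',\cdot)$ is a bijection $f$ with $f(x*y)\in\{f(x)\cdot f(y),f(y)\cdot f(x)\}$ for all $x,y\in L$. *)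

theory Defs
  imports Main
begin

text \<open>A loop is modelled on a whole type: the binary operation m is total on the type.
  Every loop is a nonempty set, so this is no loss of generality.\<close>

definition loop :: "('a \<Rightarrow> 'a \<Rightarrow> 'a) \<Rightarrow> bool" where
  "loop m \<longleftrightarrow> (\<forall>a b. \<exists>!x. m a x = b) \<and> (\<forall>a b. \<exists>!y. m y a = b)
     \<and> (\<exists>e. \<forall>x. m e x = x \<and> m x e = x)"

definition loop_unit :: "('a \<Rightarrow> 'a \<Rightarrow> 'a) \<Rightarrow> 'a" where
  "loop_unit m = (THE e. \<forall>x. m e x = x \<and> m x e = x)"

definition rmul :: "('a \<Rightarrow> 'a \<Rightarrow> 'a) \<Rightarrow> 'a \<Rightarrow> 'a \<Rightarrow> 'a" where
  "rmul m a = (\<lambda>x. m x a)"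

definition lmul :: "('a \<Rightarrow> 'a \<Rightarrow> 'a) \<Rightarrow> 'a \<Rightarrow> 'a \<Rightarrow> 'a" where
  "lmul m a = (\<lambda>x. m a x)"

inductive_set mlt :: "('a \<Rightarrow> 'a \<Rightarrow> 'a) \<Rightarrow> ('a \<Rightarrow> 'a) set" for m where
  mlt_id: "id \<in> mlt m"
| mlt_R: "f \<in> mlt m \<Longrightarrow> rmul m a \<circ> f \<in> mlt m"
| mlt_L: "f \<in> mlt m \<Longrightarrow> lmul m a \<circ> f \<in> mlt m"
| mlt_Rinv: "f \<in> mlt m \<Longrightarrow> inv (rmul m a) \<circ> f \<in> mlt m"
| mlt_Linv: "f \<in> mlt m \<Longrightarrow> inv (lmul m a) \<circ> f \<in> mlt m"

definition inn :: "('a \<Rightarrow> 'a \<Rightarrow> 'a) \<Rightarrow> ('a \<Rightarrow> 'a) set" where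
  "inn m = {\<phi> \<in> mlt m. \<phi> (loop_unit m) = loop_unit m}"

definition automorphic_loop :: "('a \<Rightarrow> 'a \<Rightarrow> 'a) \<Rightarrow> bool" where
  "automorphic_loop m \<longleftrightarrow> loop m \<and>
     (\<forall>\<phi> \<in> inn m. \<forall>x y. \<phi> (m x y) = m (\<phi> x) (\<phi> y))"

definition half_iso :: "('a \<Rightarrow> 'a \<Rightarrow> 'a) \<Rightarrow> ('b \<Rightarrow> 'b \<Rightarrow> 'b) \<Rightarrow> ('a \<Rightarrow> 'b) \<Rightarrow> bool" where
  "half_iso m m' f \<longleftrightarrow> bij f \<and>
     (\<forall>x y. f (m x y) = m' (f x) (f y) \<or> f (m x y) = m' (f y) (f x))"

definition condC :: "('a \<Rightarrow> 'a \<Rightarrow> 'a) \<Rightarrow> bool" where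
  "condC m \<longleftrightarrow> (\<forall>a b. m a (m a b) = m (m b a) a \<longleftrightarrow> m a b = m b a)"

end

theory Submission
  imports Defs
begin

lemma lu: assumes "loop m" shows "m (loop_unit m) x = x \<and> m x (loop_unit m) = x"
proof -
  obtain e where e: "\<forall>x. m e x = x \<and> m x e = x" using assms unfolding loop_def by blast
  have "(THE e. \<forall>x. m e x = x \<and> m x e = x) = e"
  proof (rule the_equality)
    show "\<forall>x. m e x = x \<and> m x e = x" by fact
    fix e' assume "\<forall>x. m e' x = x \<and> m x e' = x"
    then show "e' = e" using e by metis
  qed
  then show ?thesis using e unfolding loop_unit_def by simp
qed

lemma lcanc: assumes "loop m" "m a u = m a v" shows "u = v"
  using assms unfolding loop_def by metis

lemma rcanc: assumes "loop m" "m u a = m v a" shows "u = v"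
  using assms unfolding loop_def by metis

lemma lsol: assumes "loop m" shows "\<exists>z. m x z = w"
  using assms unfolding loop_def by metis

lemma invl: assumes "loop m" "m x u = v" shows "inv (lmul m x) v = u"
proof -
  have "inj (lmul m x)" unfolding inj_def lmul_def using lcanc[OF assms(1)] by blast
  then have "inv (lmul m x) (lmul m x u) = u" by simp
  then show ?thesis using assms(2) by (simp add: lmul_def)
qed

lemma Tauto:
  assumes A: "automorphic_loop m" and p: "m x p = m u x" and q: "m x q = m v x"
  shows "m x (m p q) = m (m u v) x"
proof -
  have L: "loop m" using A unfolding automorphic_loop_def by simp
  define \<phi> where "\<phi> = inv (lmul m x) \<circ> (rmul m x \<circ> id)"
  have mem: "\<phi> \<in> mlt m" unfolding \<phi>_def by (intro mlt_Linv mlt_R mlt_id)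
  have ev: "\<phi> w = inv (lmul m x) (m w x)" for w by (simp add: \<phi>_def rmul_def)
  have "\<phi> (loop_unit m) = loop_unit m"
    unfolding ev using lu[OF L] by (metis invl[OF L])
  with mem have "\<phi> \<in> inn m" unfolding inn_def by simp
  then have hom: "\<phi> (m u v) = m (\<phi> u) (\<phi> v)" using A unfolding automorphic_loop_def by blast
  have "\<phi> u = p" unfolding ev using invl[OF L, of x p "m u x"] p by simp
  moreover have "\<phi> v = q" unfolding ev using invl[OF L, of x q "m v x"] q by simp
  ultimately have "inv (lmul m x) (m (m u v) x) = m p q" using hom ev by simp
  moreover obtain w where w: "m x w = m (m u v) x" using lsol[OF L] by blast
  ultimately show ?thesis using invl[OF L w] by simp
qed

lemma Qprime:
  assumes A: "automorphic_loop m" and C: "condC m"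
    and h1: "m a c = m b a" and h2: "m c a = m a b"
  shows "b = c"
proof -
  have L: "loop m" using A unfolding automorphic_loop_def by simp
  have "m a (m a b) = m (m a c) a" using Tauto[OF A, of a a a b c] h2 by simp
  then have "m a (m a b) = m (m b a) a" using h1 by simp
  then have "m a b = m b a" using C unfolding condC_def by blast
  then have "m c a = m b a" using h2 by simp
  then show ?thesis using rcanc[OF L] by metis
qed

theorem proposition4p3:
  fixes m :: "'a \<Rightarrow> 'a \<Rightarrow> 'a" and m' :: "'b \<Rightarrow> 'b \<Rightarrow> 'b" and f :: "'a \<Rightarrow> 'b"
  assumes "automorphic_loop m" and "automorphic_loop m'"
    and "half_iso m m' f"
    and "condC m'"
  shows "condC m"
  unfolding condC_def
proof (intro allI iffI)
  have L: "loop m" using assms(1) unfolding automorphic_loop_def by simp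
  have L': "loop m'" using assms(2) unfolding automorphic_loop_def by simp
  have inj: "inj f" and hf: "\<And>x y. f (m x y) = m' (f x) (f y) \<or> f (m x y) = m' (f y) (f x)"
    using assms(3) unfolding half_iso_def bij_def by auto
  fix x y
  {
    assume H: "m x (m x y) = m (m y x) x"
    obtain z where z: "m x z = m y x" using lsol[OF L] by blast
    have "m x (m z x) = m (m y x) x" using Tauto[OF assms(1) z, of x x] by simp
    then have zx: "m z x = m x y" using H lcanc[OF L] by metis
    have "z = y"
    proof (rule ccontr)
      assume ne: "z \<noteq> y"
      have "m x y \<noteq> m y x" using z ne lcanc[OF L] by metis
      then have fne: "f (m x y) \<noteq> f (m y x)" using inj by (metis injD)
      have bc: "f z \<noteq> f y" using ne inj by (metis injD)
      have e1: "f (m x z) = f (m y x)" using z by simp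
      have e2: "f (m z x) = f (m x y)" using zx by simp
      note c1 = hf[of x y] and c2 = hf[of y x] and c3 = hf[of x z] and c4 = hf[of z x]
      have lc: "\<And>u v w. m' u v = m' u w \<Longrightarrow> v = w" using lcanc[OF L'] by metis
      have rc: "\<And>u v w. m' v u = m' w u \<Longrightarrow> v = w" using rcanc[OF L'] by metis
      have qp: "\<And>a b c. m' a c = m' b a \<Longrightarrow> m' c a = m' a b \<Longrightarrow> b = c"
        using Qprime[OF assms(2) assms(4)] by blast
      show False
        using c1 c2 c3 c4 e1 e2 fne bc lc rc qp by metis
    qed
    then show "m x y = m y x" using z by simp
  }
  {
    assume H: "m x y = m y x"
    have "m x y = m y x" by fact
    have "m x (m x y) = m (m x y) x" using Tauto[OF assms(1), of x x x y y] H by simp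
    then show "m x (m x y) = m (m y x) x" using H by simp
  }
qed

end
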